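(* Let $f:\mathbb{R}^n\to\mathbb{R}$ be a differentiable closed proper convex function and $x^*\in\arg\min_x f(x)$. Let $a,b,c:[0,\infty)\to[0,\infty)$, $t\mapsto a_t,b_t,c_t$, be functions that are positive on $(0,\infty)$, and let $A:[0,\infty)\to[0,\infty)$, $t\mapsto A_t$, be differentiable and positive on $(0,\infty)$, with $$A_t=a_tb_t,\qquad \dot A_t\leqslant a_t\ \ (t\geqslant0),\qquad A_0=b_0=c_0=0.$$ Let $X,Z:[0,\infty)\to\mathbb{R}^n$ be a (continuously differentiable) solution of $$\dot Z=-a_t\nabla f(X),\qquad Z=b_t\dot X+c_t\nabla f(X)+X,\qquad Z(0)=X(0)=x_0.$$ Then for every $t>0$, $$f(X(t))-f(x^* )\leqslant\frac{\|x_0-x^*\|^2}{2A_t},\qquad \inf_{0\leqslant v\leqslant t}\|\nabla f(X(v))\|^2\leqslant\frac{\|x_0-x^*\|^2}{2\int_0^t a_vc_v\,dv}.$$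
   Context: $\|\cdot\|$ is the Euclidean norm on $\mathbb{R}^n$. *)

theory Defs
  imports "HOL-Analysis.Analysis"
begin

end

theory Submission
  imports Defs "HOL-Analysis.Analysis"
begin


lemma integral_pos_aux:
  fixes g :: "real \<Rightarrow> real"
  assumes t: "t > 0" and int: "g integrable_on {0..t}"
    and nn: "\<And>v. v \<in> {0..t} \<Longrightarrow> g v \<ge> 0"
    and pos: "\<And>v. v \<in> {0<..t} \<Longrightarrow> g v > 0"
  shows "integral {0..t} g > 0"
proof -
  have ai: "g absolutely_integrable_on {0..t}"
    using nonnegative_absolutely_integrable_1[OF int] nn by blast
  have eq: "integral {0..t} g = (LINT x | lebesgue. indicator {0..t} x *\<^sub>R g x)"
    using set_lebesgue_integral_eq_integral(2)[OF ai] by (simp add: set_lebesgue_integral_def)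
  have ge: "integral {0..t} g \<ge> 0" using integral_nonneg[OF int] nn by auto
  show ?thesis
  proof (rule ccontr)
    assume "\<not> ?thesis"
    then have "integral {0..t} g = 0" using ge by auto
    then have L0: "(LINT x | lebesgue. indicator {0..t} x *\<^sub>R g x) = 0" using eq by simp
    have F1: "integrable lebesgue (\<lambda>x. indicator {0..t} x *\<^sub>R g x)"
      using ai unfolding set_integrable_def .
    have F2: "AE x in lebesgue. 0 \<le> indicator {0..t} x *\<^sub>R g x"
      by (rule AE_I2) (simp add: indicator_def nn)
    have "AE x in lebesgue. indicator {0..t} x *\<^sub>R g x = 0"
      using integral_nonneg_eq_0_iff_AE[OF F1 F2] L0 by blast
    then have "\<exists>N. negligible N \<and> {x. \<not> indicator {0..t} x *\<^sub>R g x = 0} \<subseteq> N"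
      by (rule eventually_ae_filter_negligible[THEN iffD1])
    then obtain N where N: "negligible N" "{x. \<not> indicator {0..t} x *\<^sub>R g x = 0} \<subseteq> N"
      by blast
    have "{t/2..t} \<subseteq> N"
    proof
      fix x assume "x \<in> {t/2..t}"
      then have "x \<in> {0<..t}" using t by auto
      then show "x \<in> N" using pos[of x] N(2) by (auto simp: indicator_def)
    qed
    then have "negligible {t/2..t}" using N(1) negligible_subset by blast
    then show False using negligible_interval(1)[of "t/2" t] t by simp
  qed
qed


lemma grad_ineq:
  fixes f :: "'n::euclidean_space \<Rightarrow> real"
  assumes cvx: "convex_on UNIV f" and d: "(f has_derivative (\<lambda>h. G \<bullet> h)) (at x)"
  shows "f y \<ge> f x + G \<bullet> (y - x)"
proof -
  define \<phi> where "\<phi> u = f (x + u *\<^sub>R (y - x))" for u :: real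
  have c\<phi>: "convex_on UNIV \<phi>"
  proof (rule convex_onI)
    fix w u v :: real assume w: "0 < w" "w < 1"
    have "x + ((1-w) * u + w * v) *\<^sub>R (y-x) = (1-w) *\<^sub>R (x + u *\<^sub>R (y-x)) + w *\<^sub>R (x + v *\<^sub>R (y-x))"
      by (simp add: algebra_simps)
    then show "\<phi> ((1-w) *\<^sub>R u + w *\<^sub>R v) \<le> (1-w) * \<phi> u + w * \<phi> v"
      using convex_onD[OF cvx, of w "x + u *\<^sub>R (y-x)" "x + v *\<^sub>R (y-x)"] w
      by (simp add: \<phi>_def)
  qed simp
  have l: "((\<lambda>u::real. x + u *\<^sub>R (y - x)) has_derivative (\<lambda>h. h *\<^sub>R (y - x))) (at 0)"
    by (auto intro!: derivative_eq_intros)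
  have d0: "(f has_derivative (\<lambda>h. G \<bullet> h)) (at (x + 0 *\<^sub>R (y - x)))" using d by simp
  have "((f \<circ> (\<lambda>u::real. x + u *\<^sub>R (y - x))) has_derivative ((\<lambda>h. G \<bullet> h) \<circ> (\<lambda>h. h *\<^sub>R (y - x)))) (at 0)"
    by (rule diff_chain_at[OF l d0])
  moreover have "((\<lambda>h. G \<bullet> h) \<circ> (\<lambda>h. h *\<^sub>R (y - x))) = (*) (G \<bullet> (y - x))"
    by (auto simp: fun_eq_iff mult.commute)
  moreover have "f \<circ> (\<lambda>u::real. x + u *\<^sub>R (y - x)) = \<phi>" by (auto simp: \<phi>_def fun_eq_iff)
  ultimately have "(\<phi> has_field_derivative (G \<bullet> (y - x))) (at 0)"
    by (simp add: has_field_derivative_def)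
  then have "\<phi> 1 - \<phi> 0 \<ge> (G \<bullet> (y - x)) * (1 - 0)"
    by (intro convex_on_imp_above_tangent[OF c\<phi>]) auto
  then show ?thesis by (simp add: \<phi>_def)
qed

theorem theorem5:
  fixes f :: "'n::euclidean_space \<Rightarrow> real" and gradf :: "'n \<Rightarrow> 'n"
    and xstar x0 :: 'n
    and a b c A dA :: "real \<Rightarrow> real"
    and X Z dX :: "real \<Rightarrow> 'n"
  assumes f_convex: "convex_on UNIV f"
    and f_grad: "\<And>x. (f has_derivative (\<lambda>h. gradf x \<bullet> h)) (at x)"
    and xstar_min: "\<And>x. f xstar \<le> f x"
    and a_nonneg: "\<And>t. t \<ge> 0 \<Longrightarrow> a t \<ge> 0"
    and b_nonneg: "\<And>t. t \<ge> 0 \<Longrightarrow> b t \<ge> 0"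
    and c_nonneg: "\<And>t. t \<ge> 0 \<Longrightarrow> c t \<ge> 0"
    and A_nonneg: "\<And>t. t \<ge> 0 \<Longrightarrow> A t \<ge> 0"
    and a_pos: "\<And>t. t > 0 \<Longrightarrow> a t > 0"
    and b_pos: "\<And>t. t > 0 \<Longrightarrow> b t > 0"
    and c_pos: "\<And>t. t > 0 \<Longrightarrow> c t > 0"
    and A_pos: "\<And>t. t > 0 \<Longrightarrow> A t > 0"
    and A_deriv: "\<And>t. t \<ge> 0 \<Longrightarrow> (A has_real_derivative dA t) (at t within {0..})"
    and A_eq: "\<And>t. t \<ge> 0 \<Longrightarrow> A t = a t * b t"
    and dA_le: "\<And>t. t \<ge> 0 \<Longrightarrow> dA t \<le> a t"
    and A0: "A 0 = 0" and b0: "b 0 = 0" and c0: "c 0 = 0"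
    and ac_int: "\<And>t. t \<ge> 0 \<Longrightarrow> (\<lambda>v. a v * c v) integrable_on {0..t}"
    and X_deriv: "\<And>t. t \<ge> 0 \<Longrightarrow> (X has_vector_derivative dX t) (at t within {0..})"
    and dX_cont: "continuous_on {0..} dX"
    and Z_deriv: "\<And>t. t \<ge> 0 \<Longrightarrow>
        (Z has_vector_derivative (- (a t *\<^sub>R gradf (X t)))) (at t within {0..})"
    and Z_eq: "\<And>t. t \<ge> 0 \<Longrightarrow> Z t = b t *\<^sub>R dX t + c t *\<^sub>R gradf (X t) + X t"
    and X0: "X 0 = x0" and Z0: "Z 0 = x0"
  shows "\<forall>t>0. f (X t) - f xstar \<le> (norm (x0 - xstar))\<^sup>2 / (2 * A t)
              \<and> (INF v\<in>{0..t}. (norm (gradf (X v)))\<^sup>2)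
                  \<le> (norm (x0 - xstar))\<^sup>2 / (2 * integral {0..t} (\<lambda>v. a v * c v))"
proof (intro allI impI)
  fix t :: real assume t: "t > 0"
  define m where "m = (INF v\<in>{0..t}. (norm (gradf (X v)))\<^sup>2)"
  define I where "I = integral {0..t} (\<lambda>v. a v * c v)"
  define R where "R = (norm (x0 - xstar))\<^sup>2"
  define g where "g s = A s * (f (X s) - f xstar) + ((Z s - xstar) \<bullet> (Z s - xstar)) / 2" for s
  define g' where "g' s = dA s * (f (X s) - f xstar) + A s * (gradf (X s) \<bullet> dX s)
      + (Z s - xstar) \<bullet> (- (a s *\<^sub>R gradf (X s)))" for s
  have bdd: "bdd_below ((\<lambda>v. (norm (gradf (X v)))\<^sup>2) ` {0..t})"
    by (rule bdd_belowI2[of _ 0]) simp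
  have m_le: "m \<le> (norm (gradf (X s)))\<^sup>2" if "s \<in> {0..t}" for s
    unfolding m_def using cINF_lower[OF bdd that] .
  have m_nn: "m \<ge> 0" unfolding m_def using t by (intro cINF_greatest) auto
  have gd: "(g has_vector_derivative g' s) (at s within {0..t})" if s: "s \<in> {0..t}" for s
  proof -
    have s0: "s \<ge> 0" using s by auto
    have sub: "{0..t} \<subseteq> {0::real..}" by auto
    have dX: "(X has_derivative (\<lambda>h. h *\<^sub>R dX s)) (at s within {0..t})"
      using has_derivative_subset[OF X_deriv[OF s0, unfolded has_vector_derivative_def] sub] .
    have dZ: "(Z has_derivative (\<lambda>h. h *\<^sub>R (- (a s *\<^sub>R gradf (X s))))) (at s within {0..t})"
      using has_derivative_subset[OF Z_deriv[OF s0, unfolded has_vector_derivative_def] sub] .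
    have dA': "(A has_derivative (\<lambda>h. dA s * h)) (at s within {0..t})"
      using has_derivative_subset[OF A_deriv[OF s0, unfolded has_field_derivative_def] sub] .
    have dfX: "((\<lambda>s. f (X s)) has_derivative (\<lambda>h. gradf (X s) \<bullet> (h *\<^sub>R dX s))) (at s within {0..t})"
      using diff_chain_within[OF dX has_derivative_at_withinI[OF f_grad]] by (simp add: o_def)
    have "(g has_derivative (\<lambda>h. h *\<^sub>R g' s)) (at s within {0..t})"
      unfolding g_def[abs_def]
      apply (rule derivative_eq_intros dA' dfX dZ | simp)+
      apply (simp add: g'_def fun_eq_iff algebra_simps inner_commute)
      apply (simp add: field_simps)
      done
    then show ?thesis by (simp add: has_vector_derivative_def)
  qed
  have gle: "g' s \<le> - m * (a s * c s)" if s: "s \<in> {0..t}" for s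
  proof -
    have s0: "s \<ge> 0" using s by auto
    let ?G = "gradf (X s)" and ?D = "dX s" and ?\<delta> = "f (X s) - f xstar"
    have cv: "f xstar \<ge> f (X s) + ?G \<bullet> (xstar - X s)"
      by (rule grad_ineq[OF f_convex f_grad])
    have e1: "(Z s - xstar) \<bullet> (- (a s *\<^sub>R ?G)) =
       - (a s * b s) * (?G \<bullet> ?D) - a s * c s * (?G \<bullet> ?G) - a s * (?G \<bullet> (X s - xstar))"
      using Z_eq[OF s0] by (simp add: algebra_simps inner_commute)
    have e2: "g' s = dA s * ?\<delta> - a s * c s * (?G \<bullet> ?G) - a s * (?G \<bullet> (X s - xstar))"
      unfolding g'_def e1 A_eq[OF s0] by simp
    have i1: "?G \<bullet> (X s - xstar) \<ge> ?\<delta>" using cv by (simp add: inner_diff_right)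
    have i2: "a s * (?G \<bullet> (X s - xstar)) \<ge> a s * ?\<delta>"
      using mult_left_mono[OF i1 a_nonneg[OF s0]] .
    have dl: "?\<delta> \<ge> 0" using xstar_min[of "X s"] by simp
    have i3: "dA s * ?\<delta> \<le> a s * ?\<delta>" using mult_right_mono[OF dA_le[OF s0] dl] .
    have ac0: "a s * c s \<ge> 0" using a_nonneg[OF s0] c_nonneg[OF s0] by simp
    have i4: "m * (a s * c s) \<le> a s * c s * (?G \<bullet> ?G)"
      using mult_right_mono[OF m_le[OF s] ac0] by (simp add: power2_norm_eq_inner mult.commute)
    show ?thesis using e2 i2 i3 i4 by linarith
  qed
  have ftc: "(g' has_integral (g t - g 0)) {0..t}"
    using fundamental_theorem_of_calculus[of 0 t g g'] gd t by auto
  have int2: "((\<lambda>v. - m * (a v * c v)) has_integral (- m * I)) {0..t}"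
    unfolding I_def using has_integral_mult_right[OF integrable_integral[OF ac_int[of t]], of "- m"] t by simp
  have key: "g t - g 0 \<le> - m * I"
    using has_integral_le[OF ftc int2 gle] .
  have g0: "g 0 = R / 2" unfolding g_def R_def by (simp add: A0 X0 Z0 power2_norm_eq_inner)
  have At: "A t > 0" using A_pos[OF t] .
  have dl: "f (X t) - f xstar \<ge> 0" using xstar_min[of "X t"] by simp
  have Ad: "A t * (f (X t) - f xstar) \<ge> 0" using At dl by simp
  have zz: "(Z t - xstar) \<bullet> (Z t - xstar) \<ge> 0" by simp
  have Ipos: "I > 0" unfolding I_def
    using integral_pos_aux[OF t ac_int[of t]] t a_nonneg c_nonneg a_pos c_pos by auto
  have mI: "m * I \<ge> 0" using m_nn Ipos by simp
  have gt: "g t = A t * (f (X t) - f xstar) + ((Z t - xstar) \<bullet> (Z t - xstar)) / 2"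
    by (simp add: g_def)
  have b1: "A t * (f (X t) - f xstar) \<le> R / 2" using key g0 zz mI gt by linarith
  have b2: "m * I \<le> R / 2" using key g0 zz Ad gt by linarith
  have c1: "(f (X t) - f xstar) * (2 * A t) \<le> R" using b1 by (simp add: algebra_simps)
  have c2: "m * (2 * I) \<le> R" using b2 by (simp add: algebra_simps)
  have d1: "f (X t) - f xstar \<le> R / (2 * A t)"
    using pos_le_divide_eq[of "2 * A t" "f (X t) - f xstar" R] At c1 by simp
  have d2: "m \<le> R / (2 * I)"
    using pos_le_divide_eq[of "2 * I" m R] Ipos c2 by simp
  show "f (X t) - f xstar \<le> (norm (x0 - xstar))\<^sup>2 / (2 * A t)
       \<and> (INF v\<in>{0..t}. (norm (gradf (X v)))\<^sup>2)
          \<le> (norm (x0 - xstar))\<^sup>2 / (2 * integral {0..t} (\<lambda>v. a v * c v))"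
    using d1 d2 unfolding m_def I_def R_def by blast
qed

end
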